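(* Let $(X,A,Y)$ be jointly distributed with $A,Y\in\{0,1\}$, and assume there exist deterministic functions $f_Y^*,f_A^*$ with $Y=f_Y^*(X)$ and $A=f_A^*(X)$. Then, minimizing over all (possibly randomized) representations $Z=g(X)$, $$\min_{Z:\ I(Y;Z)=H(Y)} I(A;Z)=I(A;Y).$$
   Context: A (possibly randomized) representation is $Z=g(X,S)$ for a measurable $g$ and auxiliary randomness $S$ independent of $(X,A,Y)$. $H$ denotes Shannon entropy and $I$ mutual information. *)

theory Defs
  imports "HOL-Probability.Probability"
begin

end

theory Submission imports Defs begin

lemma set_split_bool:
  fixes D :: "'a \<Rightarrow> bool"
  shows "{\<omega>\<in>space M. Q (D \<omega>) \<omega>} = {\<omega>\<in>space M. D \<omega> = True \<and> Q True \<omega>} \<union> {\<omega>\<in>space M. D \<omega> = False \<and> Q False \<omega>}"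
proof (rule set_eqI)
  fix x show "x \<in> {\<omega>\<in>space M. Q (D \<omega>) \<omega>} \<longleftrightarrow> x \<in> {\<omega>\<in>space M. D \<omega> = True \<and> Q True \<omega>} \<union> {\<omega>\<in>space M. D \<omega> = False \<and> Q False \<omega>}"
    by (cases "D x") auto
qed

lemma (in prob_space) emeasure_split_bool:
  fixes D :: "'a \<Rightarrow> bool"
  assumes "{\<omega>\<in>space M. D \<omega> = True \<and> Q True \<omega>} \<in> sets M"
    "{\<omega>\<in>space M. D \<omega> = False \<and> Q False \<omega>} \<in> sets M"
  shows "emeasure M {\<omega>\<in>space M. Q (D \<omega>) \<omega>} = (\<Sum>d\<in>UNIV. emeasure M {\<omega>\<in>space M. D \<omega> = d \<and> Q d \<omega>})"
  unfolding set_split_bool[of M Q D] UNIV_bool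
  by (subst plus_emeasure[symmetric]) (use assms in auto)

lemma (in prob_space) measure_split_bool:
  fixes D :: "'a \<Rightarrow> bool"
  assumes "{\<omega>\<in>space M. D \<omega> = True \<and> Q True \<omega>} \<in> sets M"
    "{\<omega>\<in>space M. D \<omega> = False \<and> Q False \<omega>} \<in> sets M"
  shows "prob {\<omega>\<in>space M. Q (D \<omega>) \<omega>} = (\<Sum>d\<in>UNIV. prob {\<omega>\<in>space M. D \<omega> = d \<and> Q d \<omega>})"
  unfolding set_split_bool[of M Q D] UNIV_bool
  by (subst finite_measure_Union) (use assms in auto)

lemma (in prob_space) distr_bool_density:
  fixes D :: "'a \<Rightarrow> bool"
  assumes D[measurable]: "D \<in> measurable M (count_space UNIV)"
  shows "distr M (count_space UNIV) D = density (count_space UNIV) (\<lambda>d. ennreal (prob {\<omega>\<in>space M. D \<omega> = d}))"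
proof (rule measure_eqI)
  fix B :: "bool set" assume "B \<in> sets (distr M (count_space UNIV) D)"
  have "emeasure (distr M (count_space UNIV) D) B = emeasure M {\<omega>\<in>space M. D \<omega> \<in> B}"
    by (subst emeasure_distr) (auto simp: vimage_def Int_def conj_commute)
  also have "\<dots> = (\<Sum>d\<in>UNIV. emeasure M {\<omega>\<in>space M. D \<omega> = d \<and> d \<in> B})"
    by (rule emeasure_split_bool[where Q="\<lambda>d _. d \<in> B"]) auto
  also have "\<dots> = (\<Sum>d\<in>UNIV. ennreal (prob {\<omega>\<in>space M. D \<omega> = d}) * indicator B d)"
    by (intro sum.cong refl) (auto simp: emeasure_eq_measure indicator_def)
  also have "\<dots> = emeasure (density (count_space UNIV) (\<lambda>d. ennreal (prob {\<omega>\<in>space M. D \<omega> = d}))) B"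
    by (subst emeasure_density) (auto simp: nn_integral_count_space_finite)
  finally show "emeasure (distr M (count_space UNIV) D) B = emeasure (density (count_space UNIV) (\<lambda>d. ennreal (prob {\<omega>\<in>space M. D \<omega> = d}))) B" .
qed simp

lemma (in prob_space) prob_bool_sum:
  fixes D :: "'a \<Rightarrow> bool"
  assumes D[measurable]: "D \<in> measurable M (count_space UNIV)"
  shows "prob {\<omega>\<in>space M. D \<omega> = True} + prob {\<omega>\<in>space M. D \<omega> = False} = 1"
  using measure_split_bool[of D "\<lambda>_ _. True"] by (simp add: UNIV_bool prob_space)

lemma (in information_space) entropy_bool:
  fixes D :: "'a \<Rightarrow> bool"
  assumes D[measurable]: "D \<in> measurable M (count_space UNIV)"
  shows "entropy b (count_space UNIV) D = - (\<Sum>d\<in>UNIV. prob {\<omega>\<in>space M. D \<omega> = d} * log b (prob {\<omega>\<in>space M. D \<omega> = d}))"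
proof -
  have "distributed M (count_space UNIV) D (\<lambda>d. ennreal (prob {\<omega>\<in>space M. D \<omega> = d}))"
    unfolding distributed_def using distr_bool_density[OF D] by auto
  then show ?thesis
    by (subst entropy_distr[where f="\<lambda>d. prob {\<omega>\<in>space M. D \<omega> = d}"])
       (auto simp: lebesgue_integral_count_space_finite)
qed


definition cdens :: "'a measure \<Rightarrow> ('a \<Rightarrow> bool) \<Rightarrow> ('a \<Rightarrow> 'z) \<Rightarrow> 'z measure \<Rightarrow> (bool \<Rightarrow> 'z \<Rightarrow> real) \<Rightarrow> bool" where
  "cdens M D Z SZ q \<longleftrightarrow> (\<forall>d. q d \<in> borel_measurable SZ) \<and> (\<forall>d z. 0 \<le> q d z \<and> q d z \<le> 1) \<and>
     (\<forall>z. q False z = 1 - q True z) \<and> (\<forall>d z. measure M {\<omega>\<in>space M. D \<omega> = d} = 0 \<longrightarrow> q d z = 0) \<and>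
     (\<forall>d B. B \<in> sets SZ \<longrightarrow> measure M {\<omega>\<in>space M. D \<omega> = d \<and> Z \<omega> \<in> B} = (\<integral>\<omega>. q d (Z \<omega>) * indicator B (Z \<omega>) \<partial>M))"

lemma xlogx_bound:
  fixes x p b :: real
  assumes "0 \<le> x" "x \<le> 1" "0 < p" "1 < b"
  shows "\<bar>x * log b (x / p)\<bar> \<le> (1 + \<bar>ln p\<bar>) / ln b"
proof (cases "x = 0")
  case True then show ?thesis using assms by (simp add: divide_nonneg_pos)
next
  case False
  then have x0: "0 < x" using assms by simp
  have lb: "0 < ln b" using assms by simp
  have e: "x * log b (x / p) = (x * ln x - x * ln p) / ln b"
    using x0 assms by (simp add: log_def ln_div field_simps)
  have h1: "x * ln x \<le> 0" using x0 assms by (simp add: mult_nonneg_nonpos)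
  have "ln (1/x) \<le> 1/x - 1" using x0 by (intro ln_le_minus_one) simp
  then have "- ln x \<le> 1/x - 1" using x0 by (simp add: ln_div)
  then have "x * (- ln x) \<le> x * (1/x - 1)" using x0 by (intro mult_left_mono) auto
  moreover have "x * (1/x - 1) = 1 - x" using x0 by (simp add: field_simps)
  ultimately have h2: "-1 \<le> x * ln x" using x0 assms by linarith
  have h3: "\<bar>x * ln p\<bar> \<le> \<bar>ln p\<bar>" using assms by (simp add: abs_mult mult_left_le_one_le)
  have "\<bar>x * ln x - x * ln p\<bar> \<le> 1 + \<bar>ln p\<bar>" using h1 h2 h3 by linarith
  then show ?thesis unfolding e using lb by (simp add: abs_div divide_right_mono)
qed

lemma (in information_space) MI_bool:
  fixes D :: "'a \<Rightarrow> bool" and Z :: "'a \<Rightarrow> 'z"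
  assumes D[measurable]: "D \<in> measurable M (count_space UNIV)" and Z[measurable]: "Z \<in> measurable M SZ"
    and q: "cdens M D Z SZ q"
  shows "mutual_information b (count_space UNIV) SZ D Z =
    (\<Sum>d\<in>UNIV. \<integral>\<omega>. q d (Z \<omega>) * log b (q d (Z \<omega>) / prob {\<omega>\<in>space M. D \<omega> = d}) \<partial>M)"
proof -
  define p where "p d = prob {\<omega>\<in>space M. D \<omega> = d}" for d
  let ?PZ = "distr M SZ Z"
  let ?mu = "count_space (UNIV::bool set) \<Otimes>\<^sub>M ?PZ"
  interpret PZ: prob_space ?PZ by (rule prob_space_distr) simp
  have qm[measurable]: "\<And>d. q d \<in> borel_measurable SZ" and q01: "\<And>d z. 0 \<le> q d z" "\<And>d z. q d z \<le> 1"
    and q0: "\<And>d z. p d = 0 \<Longrightarrow> q d z = 0"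
    and qB: "\<And>d B. B \<in> sets SZ \<Longrightarrow> prob {\<omega>\<in>space M. D \<omega> = d \<and> Z \<omega> \<in> B} = (\<integral>\<omega>. q d (Z \<omega>) * indicator B (Z \<omega>) \<partial>M)"
    using q unfolding cdens_def p_def by auto
  interpret mu: finite_measure ?mu
    by (rule finite_measure_pair_measure) (auto intro: finite_measure_count_space PZ.finite_measure_axioms)
  interpret pmu: pair_sigma_finite "count_space (UNIV::bool set)" ?PZ
    by (intro pair_sigma_finite.intro sigma_finite_measure_count_space_finite PZ.sigma_finite_measure_axioms) simp
  have sets_mu: "sets ?mu = sets (count_space UNIV \<Otimes>\<^sub>M SZ)" by (rule sets_pair_measure_cong) auto
  have qsplit: "\<And>x. q (fst x) (snd x) = (if fst x then q True (snd x) else q False (snd x))" by simp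
  have f_m[measurable]: "(\<lambda>x. p (fst x)) \<in> borel_measurable ?mu" by simp
  have g_m[measurable]: "(\<lambda>x. q (fst x) (snd x)) \<in> borel_measurable ?mu"
    unfolding qsplit by measurable
  have prod_eq: "distr M (count_space UNIV) D \<Otimes>\<^sub>M ?PZ = density ?mu (\<lambda>x. ennreal (p (fst x)))"
  proof -
    have "density (count_space UNIV) (\<lambda>d. ennreal (p d)) \<Otimes>\<^sub>M density ?PZ (\<lambda>_. 1) =
      density ?mu (\<lambda>(x,y). ennreal (p x) * 1)"
      by (rule pair_measure_density) (auto simp: density_1 intro: PZ.sigma_finite_measure_axioms)
    then show ?thesis unfolding density_1 distr_bool_density[OF D] p_def
      by (simp add: case_prod_beta')
  qed
  have joint_eq: "distr M (count_space UNIV \<Otimes>\<^sub>M SZ) (\<lambda>\<omega>. (D \<omega>, Z \<omega>)) = density ?mu (\<lambda>x. ennreal (q (fst x) (snd x)))"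
  proof (rule measure_eqI)
    show "sets (distr M (count_space UNIV \<Otimes>\<^sub>M SZ) (\<lambda>\<omega>. (D \<omega>, Z \<omega>))) = sets (density ?mu (\<lambda>x. ennreal (q (fst x) (snd x))))"
      using sets_mu by simp
    fix C assume "C \<in> sets (distr M (count_space UNIV \<Otimes>\<^sub>M SZ) (\<lambda>\<omega>. (D \<omega>, Z \<omega>)))"
    then have C[measurable]: "C \<in> sets (count_space UNIV \<Otimes>\<^sub>M SZ)" by simp
    have Cd[measurable]: "\<And>d. Pair d -` C \<in> sets SZ" using C by (rule sets_Pair1)
    have int: "\<And>d. integrable M (\<lambda>\<omega>. q d (Z \<omega>) * indicator (Pair d -` C) (Z \<omega>))"
      by (rule integrable_const_bound[where B=1]) (auto simp: q01 indicator_def abs_le_iff intro: order_trans[OF _ q01(2)] order_trans[OF q01(1)])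
    have "emeasure (distr M (count_space UNIV \<Otimes>\<^sub>M SZ) (\<lambda>\<omega>. (D \<omega>, Z \<omega>))) C = emeasure M {\<omega>\<in>space M. (D \<omega>, Z \<omega>) \<in> C}"
      by (subst emeasure_distr) (auto simp: vimage_def Int_def conj_commute)
    also have "\<dots> = (\<Sum>d\<in>UNIV. emeasure M {\<omega>\<in>space M. D \<omega> = d \<and> Z \<omega> \<in> Pair d -` C})"
    proof -
      have "emeasure M {\<omega>\<in>space M. (\<lambda>d \<omega>. Z \<omega> \<in> Pair d -` C) (D \<omega>) \<omega>} = (\<Sum>d\<in>UNIV. emeasure M {\<omega>\<in>space M. D \<omega> = d \<and> (\<lambda>d \<omega>. Z \<omega> \<in> Pair d -` C) d \<omega>})"
        by (rule emeasure_split_bool) auto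
      then show ?thesis by simp
    qed
    also have "\<dots> = (\<Sum>d\<in>UNIV. \<integral>\<^sup>+\<omega>. ennreal (q d (Z \<omega>) * indicator (Pair d -` C) (Z \<omega>)) \<partial>M)"
    proof (intro sum.cong refl)
      fix d
      have "emeasure M {\<omega>\<in>space M. D \<omega> = d \<and> Z \<omega> \<in> Pair d -` C} = ennreal (prob {\<omega>\<in>space M. D \<omega> = d \<and> Z \<omega> \<in> Pair d -` C})"
        by (simp add: emeasure_eq_measure)
      also have "\<dots> = ennreal (\<integral>\<omega>. q d (Z \<omega>) * indicator (Pair d -` C) (Z \<omega>) \<partial>M)"
        using qB[OF Cd] by simp
      also have "\<dots> = \<integral>\<^sup>+\<omega>. ennreal (q d (Z \<omega>) * indicator (Pair d -` C) (Z \<omega>)) \<partial>M"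
        by (rule nn_integral_eq_integral[symmetric, OF int]) (simp add: q01)
      finally show "emeasure M {\<omega>\<in>space M. D \<omega> = d \<and> Z \<omega> \<in> Pair d -` C} = \<integral>\<^sup>+\<omega>. ennreal (q d (Z \<omega>) * indicator (Pair d -` C) (Z \<omega>)) \<partial>M" .
    qed
    also have "\<dots> = (\<Sum>d\<in>UNIV. \<integral>\<^sup>+z. ennreal (q d z) * indicator C (d, z) \<partial>?PZ)"
      by (intro sum.cong refl, subst nn_integral_distr) (auto intro!: nn_integral_cong simp: indicator_def)
    also have "\<dots> = (\<integral>\<^sup>+d. \<integral>\<^sup>+z. ennreal (q d z) * indicator C (d, z) \<partial>?PZ \<partial>count_space UNIV)"
      by (simp add: nn_integral_count_space_finite)
    also have "\<dots> = (\<integral>\<^sup>+x. ennreal (q (fst x) (snd x)) * indicator C x \<partial>?mu)"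
      by (subst PZ.nn_integral_fst[symmetric]) (auto simp: sets_mu)
    also have "\<dots> = emeasure (density ?mu (\<lambda>x. ennreal (q (fst x) (snd x)))) C"
      by (subst emeasure_density) (auto simp: sets_mu)
    finally show "emeasure (distr M (count_space UNIV \<Otimes>\<^sub>M SZ) (\<lambda>\<omega>. (D \<omega>, Z \<omega>))) C = emeasure (density ?mu (\<lambda>x. ennreal (q (fst x) (snd x)))) C" .
  qed
  have "mutual_information b (count_space UNIV) SZ D Z =
      KL_divergence b (density ?mu (\<lambda>x. ennreal (p (fst x)))) (density ?mu (\<lambda>x. ennreal (q (fst x) (snd x))))"
    unfolding mutual_information_def prod_eq joint_eq ..
  also have "\<dots> = (\<integral>x. q (fst x) (snd x) * log b (q (fst x) (snd x) / p (fst x)) \<partial>?mu)"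
    by (rule mu.KL_density_density) (auto simp: b_gt_1 q01 p_def q0[unfolded p_def])
  also have "\<dots> = (\<integral>d. \<integral>z. q d z * log b (q d z / p d) \<partial>?PZ \<partial>count_space UNIV)"
  proof (rule pmu.integral_fst'[symmetric, where f="\<lambda>x. q (fst x) (snd x) * log b (q (fst x) (snd x) / p (fst x))", simplified])
    show "integrable ?mu (\<lambda>x. q (fst x) (snd x) * log b (q (fst x) (snd x) / p (fst x)))"
    proof (rule mu.integrable_const_bound[where B="(\<Sum>d\<in>UNIV. (1 + \<bar>ln (p d)\<bar>) / ln b)"])
      show "AE x in ?mu. norm (q (fst x) (snd x) * log b (q (fst x) (snd x) / p (fst x))) \<le> (\<Sum>d\<in>UNIV. (1 + \<bar>ln (p d)\<bar>) / ln b)"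
      proof (intro AE_I2)
        fix x :: "bool \<times> 'z"
        have nn: "\<And>d. 0 \<le> (1 + \<bar>ln (p d)\<bar>) / ln b" using b_gt_1 by (simp add: divide_nonneg_pos)
        have "\<bar>q (fst x) (snd x) * log b (q (fst x) (snd x) / p (fst x))\<bar> \<le> (1 + \<bar>ln (p (fst x))\<bar>) / ln b"
        proof (cases "p (fst x) = 0")
          case True then show ?thesis using q0[OF True] nn less_imp_le[OF ln_gt_zero[OF b_gt_1]] by simp
        next
          case False
          then have "0 < p (fst x)" unfolding p_def by (simp add: zero_less_measure_iff)
          then show ?thesis by (intro xlogx_bound) (auto simp: q01 b_gt_1)
        qed
        also have "\<dots> \<le> (\<Sum>d\<in>UNIV. (1 + \<bar>ln (p d)\<bar>) / ln b)"
          by (rule member_le_sum) (auto simp: nn)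
        finally show "norm (q (fst x) (snd x) * log b (q (fst x) (snd x) / p (fst x))) \<le> (\<Sum>d\<in>UNIV. (1 + \<bar>ln (p d)\<bar>) / ln b)" by simp
      qed
    qed measurable
  qed
  also have "\<dots> = (\<Sum>d\<in>UNIV. \<integral>z. q d z * log b (q d z / p d) \<partial>?PZ)"
    by (simp add: lebesgue_integral_count_space_finite)
  also have "\<dots> = (\<Sum>d\<in>UNIV. \<integral>\<omega>. q d (Z \<omega>) * log b (q d (Z \<omega>) / p d) \<partial>M)"
    by (intro sum.cong refl integral_distr) auto
  finally show ?thesis unfolding p_def .
qed


lemma (in prob_space) cdens_exists:
  fixes D :: "'a \<Rightarrow> bool" and Z :: "'a \<Rightarrow> 'z"
  assumes D[measurable]: "D \<in> measurable M (count_space UNIV)" and Z[measurable]: "Z \<in> measurable M SZ"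
  shows "\<exists>q. cdens M D Z SZ q"
proof -
  define p where "p d = prob {\<omega>\<in>space M. D \<omega> = d}" for d
  let ?PZ = "distr M SZ Z"
  interpret PZ: prob_space ?PZ by (rule prob_space_distr) simp
  define \<nu> where "\<nu> d = distr (density M (indicator {\<omega>\<in>space M. D \<omega> = d})) SZ Z" for d
  have em\<nu>: "emeasure (\<nu> d) B = emeasure M {\<omega>\<in>space M. D \<omega> = d \<and> Z \<omega> \<in> B}" if B: "B \<in> sets SZ" for d B
  proof -
    have "emeasure (\<nu> d) B = emeasure (density M (indicator {\<omega>\<in>space M. D \<omega> = d})) (Z -` B \<inter> space M)"
      unfolding \<nu>_def using B by (subst emeasure_distr) auto
    also have "\<dots> = (\<integral>\<^sup>+\<omega>. indicator {\<omega>\<in>space M. D \<omega> = d} \<omega> * indicator (Z -` B \<inter> space M) \<omega> \<partial>M)"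
      using B by (intro emeasure_density) auto
    also have "\<dots> = (\<integral>\<^sup>+\<omega>. indicator {\<omega>\<in>space M. D \<omega> = d \<and> Z \<omega> \<in> B} \<omega> \<partial>M)"
      by (rule nn_integral_cong) (auto simp: indicator_def)
    also have "\<dots> = emeasure M {\<omega>\<in>space M. D \<omega> = d \<and> Z \<omega> \<in> B}"
      using B by (subst nn_integral_indicator) auto
    finally show ?thesis .
  qed
  have sets\<nu>: "sets (\<nu> d) = sets ?PZ" for d unfolding \<nu>_def by simp
  have fin\<nu>: "finite_measure (\<nu> d)" for d
  proof (rule finite_measureI)
    have "emeasure (\<nu> d) (space (\<nu> d)) = emeasure M {\<omega>\<in>space M. D \<omega> = d \<and> Z \<omega> \<in> space SZ}"
      unfolding \<nu>_def[of d] by (subst em\<nu>[symmetric]) (auto simp: \<nu>_def)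
    then show "emeasure (\<nu> d) (space (\<nu> d)) \<noteq> \<infinity>" by simp
  qed
  have ac\<nu>: "absolutely_continuous ?PZ (\<nu> d)" for d
    unfolding absolutely_continuous_def
  proof
    fix B assume "B \<in> null_sets ?PZ"
    then have B: "B \<in> sets SZ" "emeasure M (Z -` B \<inter> space M) = 0"
      by (auto simp: null_sets_def emeasure_distr)
    have "emeasure M {\<omega>\<in>space M. D \<omega> = d \<and> Z \<omega> \<in> B} \<le> emeasure M (Z -` B \<inter> space M)"
      using B by (intro emeasure_mono) auto
    then show "B \<in> null_sets (\<nu> d)" using B em\<nu>[OF B(1)] sets\<nu>[of d] by (auto simp: null_sets_def)
  qed
  have "\<forall>d. \<exists>r. r \<in> borel_measurable SZ \<and> (\<forall>x. 0 \<le> r x) \<and> density ?PZ (\<lambda>x. ennreal (r x)) = \<nu> d"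
  proof
    fix d
    obtain r where r: "r \<in> borel_measurable ?PZ" "AE x in ?PZ. RN_deriv ?PZ (\<nu> d) x = ennreal (r x)" "\<And>x. 0 \<le> r x"
      using PZ.real_RN_deriv[OF fin\<nu> ac\<nu> sets\<nu>] by metis
    have "density ?PZ (\<lambda>x. ennreal (r x)) = density ?PZ (RN_deriv ?PZ (\<nu> d))"
      using r by (intro density_cong) auto
    also have "\<dots> = \<nu> d" by (rule PZ.density_RN_deriv[OF ac\<nu> sets\<nu>])
    finally show "\<exists>r. r \<in> borel_measurable SZ \<and> (\<forall>x. 0 \<le> r x) \<and> density ?PZ (\<lambda>x. ennreal (r x)) = \<nu> d"
      using r by (intro exI[of _ r]) auto
  qed
  then obtain r where r_m[measurable]: "\<And>d. r d \<in> borel_measurable SZ" and r_nn: "\<And>d x. 0 \<le> r d x"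
    and r_dens: "\<And>d. density ?PZ (\<lambda>x. ennreal (r d x)) = \<nu> d" by metis
  have rB: "emeasure M {\<omega>\<in>space M. D \<omega> = d \<and> Z \<omega> \<in> B} = (\<integral>\<^sup>+z. ennreal (r d z) * indicator B z \<partial>?PZ)"
    if B: "B \<in> sets SZ" for d B
  proof -
    have "emeasure (\<nu> d) B = emeasure (density ?PZ (\<lambda>x. ennreal (r d x))) B" using r_dens[of d] by simp
    also have "\<dots> = (\<integral>\<^sup>+z. ennreal (r d z) * indicator B z \<partial>?PZ)" by (rule emeasure_density) (auto simp: B)
    finally show ?thesis using em\<nu>[OF B, of d] by simp
  qed
  have rsum: "AE z in ?PZ. r True z + r False z = 1"
  proof -
    have "density ?PZ (\<lambda>z. ennreal (r True z + r False z)) = density ?PZ (\<lambda>_. 1)"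
    proof (rule measure_eqI)
      fix B assume "B \<in> sets (density ?PZ (\<lambda>z. ennreal (r True z + r False z)))"
      then have B[measurable]: "B \<in> sets SZ" by simp
      have "emeasure (density ?PZ (\<lambda>z. ennreal (r True z + r False z))) B =
          (\<integral>\<^sup>+z. ennreal (r True z) * indicator B z + ennreal (r False z) * indicator B z \<partial>?PZ)"
        by (subst emeasure_density) (auto intro!: nn_integral_cong simp: r_nn distrib_right)
      also have "\<dots> = (\<integral>\<^sup>+z. ennreal (r True z) * indicator B z \<partial>?PZ) + (\<integral>\<^sup>+z. ennreal (r False z) * indicator B z \<partial>?PZ)"
        by (rule nn_integral_add) auto
      also have "\<dots> = (\<Sum>d\<in>UNIV. emeasure M {\<omega>\<in>space M. D \<omega> = d \<and> Z \<omega> \<in> B})"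
        by (simp add: rB UNIV_bool)
      also have "\<dots> = emeasure M {\<omega>\<in>space M. (\<lambda>d \<omega>. Z \<omega> \<in> B) (D \<omega>) \<omega>}"
        by (rule emeasure_split_bool[symmetric]) auto
      also have "\<dots> = emeasure (density ?PZ (\<lambda>_. 1)) B"
        by (simp add: density_1 emeasure_distr vimage_def Int_def conj_commute)
      finally show "emeasure (density ?PZ (\<lambda>z. ennreal (r True z + r False z))) B = emeasure (density ?PZ (\<lambda>_. 1)) B" .
    qed simp
    then have "AE z in ?PZ. ennreal (r True z + r False z) = 1"
      by (intro PZ.density_unique) auto
    then show ?thesis by simp
  qed
  have rtot: "(\<integral>\<^sup>+z. ennreal (r d z) \<partial>?PZ) = ennreal (p d)" for d
  proof -
    have "(\<integral>\<^sup>+z. ennreal (r d z) \<partial>?PZ) = (\<integral>\<^sup>+z. ennreal (r d z) * indicator (space SZ) z \<partial>?PZ)"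
      by (intro nn_integral_cong) auto
    also have "\<dots> = emeasure M {\<omega>\<in>space M. D \<omega> = d \<and> Z \<omega> \<in> space SZ}" by (rule rB[symmetric]) auto
    also have "\<dots> = ennreal (p d)"
    proof -
      have "{\<omega>\<in>space M. D \<omega> = d \<and> Z \<omega> \<in> space SZ} = {\<omega>\<in>space M. D \<omega> = d}"
        using measurable_space[OF Z] by auto
      then show ?thesis by (simp add: p_def emeasure_eq_measure)
    qed
    finally show ?thesis .
  qed
  have r0: "AE z in ?PZ. r d z = 0" if "p d = 0" for d
  proof -
    have "AE z in ?PZ. ennreal (r d z) = 0"
      using rtot[of d] that by (subst nn_integral_0_iff_AE[symmetric]) auto
    then show ?thesis using r_nn by simp
  qed
  have psum: "p True + p False = 1" unfolding p_def by (rule prob_bool_sum[OF D])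
  have pnn: "0 \<le> p d" for d unfolding p_def by simp
  define qT where "qT z = (if p True = 0 then 0 else if p False = 0 then 1 else max 0 (min 1 (r True z)))" for z
  define q where "q d z = (if d then qT z else 1 - qT z)" for d z
  have qT01: "0 \<le> qT z" "qT z \<le> 1" for z unfolding qT_def by auto
  have qr: "AE z in ?PZ. \<forall>d. q d z = r d z"
  proof (cases "p True = 0")
    case T0: True
    from r0[OF T0] rsum show ?thesis by eventually_elim (auto simp: q_def qT_def T0)
  next
    case F1: False
    show ?thesis
    proof (cases "p False = 0")
      case F0: True
      from r0[OF F0] rsum show ?thesis by eventually_elim (auto simp: q_def qT_def F1 F0)
    next
      case F2: False
      from rsum show ?thesis
      proof eventually_elim
        case (elim z)
        have "r True z \<le> 1" using elim r_nn[of False z] by linarith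
        then show ?case using elim r_nn[of True z] by (auto simp: q_def qT_def F1 F2)
      qed
    qed
  qed
  have qm[measurable]: "q d \<in> borel_measurable SZ" for d
    unfolding q_def qT_def by (cases d) auto
  have q01: "0 \<le> q d z" "q d z \<le> 1" for d z unfolding q_def using qT01[of z] by auto
  have "cdens M D Z SZ q"
    unfolding cdens_def
  proof (intro conjI allI impI)
    show "q d \<in> borel_measurable SZ" for d by simp
    show "0 \<le> q d z" "q d z \<le> 1" for d z by (rule q01)+
    show "q False z = 1 - q True z" for z by (simp add: q_def)
    show "q d z = 0" if "prob {\<omega> \<in> space M. D \<omega> = d} = 0" for d z
      using that psum unfolding p_def[symmetric] by (cases d) (auto simp: q_def qT_def)
    fix d B assume B[measurable]: "B \<in> sets SZ"
    have int: "integrable M (\<lambda>\<omega>. q d (Z \<omega>) * indicator B (Z \<omega>))"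
      by (rule integrable_const_bound[where B=1]) (auto simp: q01 indicator_def abs_le_iff intro: order_trans[OF _ q01(2)] order_trans[OF q01(1)])
    have "ennreal (prob {\<omega>\<in>space M. D \<omega> = d \<and> Z \<omega> \<in> B}) = (\<integral>\<^sup>+z. ennreal (r d z) * indicator B z \<partial>?PZ)"
      using rB[OF B, of d] by (simp add: emeasure_eq_measure)
    also have "\<dots> = (\<integral>\<^sup>+z. ennreal (q d z * indicator B z) \<partial>?PZ)"
      using qr by (intro nn_integral_cong_AE) (auto simp: indicator_def)
    also have "\<dots> = (\<integral>\<^sup>+\<omega>. ennreal (q d (Z \<omega>) * indicator B (Z \<omega>)) \<partial>M)"
      by (subst nn_integral_distr) auto
    also have "\<dots> = ennreal (\<integral>\<omega>. q d (Z \<omega>) * indicator B (Z \<omega>) \<partial>M)"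
      by (rule nn_integral_eq_integral[OF int]) (simp add: q01)
    finally show "prob {\<omega>\<in>space M. D \<omega> = d \<and> Z \<omega> \<in> B} = (\<integral>\<omega>. q d (Z \<omega>) * indicator B (Z \<omega>) \<partial>M)"
      by (subst (asm) ennreal_inj) (auto intro!: integral_nonneg_AE simp: q01)
  qed
  then show ?thesis by blast
qed


lemma xlogx_nonpos:
  fixes x b :: real
  assumes "0 \<le> x" "x \<le> 1" "1 < b"
  shows "x * log b x \<le> 0"
proof (cases "x = 0")
  case False
  then have "log b x \<le> 0" using assms by (simp add: log_le_zero_cancel_iff)
  then show ?thesis using assms by (simp add: mult_nonneg_nonpos)
qed simp

lemma xlogx_neg:
  fixes x b :: real
  assumes "0 < x" "x < 1" "1 < b"
  shows "x * log b x < 0"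
proof -
  have "log b x < 0" using assms by simp
  then show ?thesis using assms by (simp add: mult_pos_neg)
qed

lemma binent_zero:
  fixes x b :: real
  assumes "0 \<le> x" "x \<le> 1" "1 < b" "x * log b x + (1 - x) * log b (1 - x) = 0"
  shows "x = 0 \<or> x = 1"
proof (rule ccontr)
  assume "\<not> (x = 0 \<or> x = 1)"
  then have "0 < x" "x < 1" using assms by auto
  then have "x * log b x < 0" "(1 - x) * log b (1 - x) < 0" using assms by (auto intro!: xlogx_neg)
  then show False using assms by linarith
qed

lemma logsum_pt:
  fixes x r p b :: real
  assumes "0 \<le> x" "0 \<le> r" "0 < p" "1 < b" "r = 0 \<longrightarrow> x = 0"
  shows "x * log b (r / p) + (x - r) / ln b \<le> x * log b (x / p)"
proof (cases "x = 0")
  case True then show ?thesis using assms by (simp add: divide_nonpos_pos)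
next
  case False
  then have x0: "0 < x" and r0: "0 < r" using assms by auto
  have lb: "0 < ln b" using assms by simp
  have "ln (r / x) \<le> r / x - 1" using x0 r0 by (intro ln_le_minus_one) simp
  then have "x * ln (r / x) \<le> x * (r / x - 1)" using x0 by (intro mult_left_mono) auto
  also have "\<dots> = r - x" using x0 by (simp add: field_simps)
  finally have "x * ln r - x * ln x \<le> r - x" using x0 r0 by (simp add: ln_div right_diff_distrib)
  then have "x * (ln r - ln p) + (x - r) \<le> x * (ln x - ln p)" by (simp add: right_diff_distrib)
  then have "(x * (ln r - ln p) + (x - r)) / ln b \<le> (x * (ln x - ln p)) / ln b"
    using lb by (intro divide_right_mono) auto
  then show ?thesis using x0 r0 assms by (simp add: log_def ln_div add_divide_distrib)
qed

lemma cdens_D: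
  assumes "cdens M D Z SZ q"
  shows "\<And>d. q d \<in> borel_measurable SZ" "\<And>d z. 0 \<le> q d z" "\<And>d z. q d z \<le> 1"
    "\<And>z. q False z = 1 - q True z" "\<And>d z. measure M {\<omega>\<in>space M. D \<omega> = d} = 0 \<Longrightarrow> q d z = 0"
    "\<And>d B. B \<in> sets SZ \<Longrightarrow> measure M {\<omega>\<in>space M. D \<omega> = d \<and> Z \<omega> \<in> B} = (\<integral>\<omega>. q d (Z \<omega>) * indicator B (Z \<omega>) \<partial>M)"
  using assms unfolding cdens_def by auto

lemma (in prob_space) cdens_total:
  assumes Z[measurable]: "Z \<in> measurable M SZ" and q: "cdens M D Z SZ q"
  shows "(\<integral>\<omega>. q d (Z \<omega>) \<partial>M) = prob {\<omega>\<in>space M. D \<omega> = d}"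
proof -
  have "prob {\<omega>\<in>space M. D \<omega> = d} = prob {\<omega>\<in>space M. D \<omega> = d \<and> Z \<omega> \<in> space SZ}"
    using measurable_space[OF Z] by (intro arg_cong[where f=prob]) auto
  also have "\<dots> = (\<integral>\<omega>. q d (Z \<omega>) * indicator (space SZ) (Z \<omega>) \<partial>M)" by (rule cdens_D(6)[OF q]) simp
  also have "\<dots> = (\<integral>\<omega>. q d (Z \<omega>) \<partial>M)"
    using measurable_space[OF Z] by (intro Bochner_Integration.integral_cong) auto
  finally show ?thesis ..
qed

lemma (in information_space) MI_minus_entropy:
  fixes D :: "'a \<Rightarrow> bool" and Z :: "'a \<Rightarrow> 'z"
  assumes D[measurable]: "D \<in> measurable M (count_space UNIV)" and Z[measurable]: "Z \<in> measurable M SZ"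
    and q: "cdens M D Z SZ q"
  shows "mutual_information b (count_space UNIV) SZ D Z - entropy b (count_space UNIV) D =
    (\<integral>\<omega>. (\<Sum>d\<in>UNIV. q d (Z \<omega>) * log b (q d (Z \<omega>))) \<partial>M)"
proof -
  define p where "p d = prob {\<omega>\<in>space M. D \<omega> = d}" for d
  note qD = cdens_D[OF q]
  have qm[measurable]: "\<And>d. q d \<in> borel_measurable SZ" by (rule qD(1))
  have lb: "0 < ln b" using b_gt_1 by simp
  have int1: "integrable M (\<lambda>\<omega>. q d (Z \<omega>) * log b (q d (Z \<omega>)))" for d
  proof (rule integrable_const_bound[where B="(1 + \<bar>ln 1\<bar>) / ln b"])
    show "AE x in M. norm (q d (Z x) * log b (q d (Z x))) \<le> (1 + \<bar>ln 1\<bar>) / ln b"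
      using xlogx_bound[of "q d _" 1 b] qD(2,3) b_gt_1 by auto
  qed simp
  have int2: "integrable M (\<lambda>\<omega>. q d (Z \<omega>))" for d
    by (rule integrable_const_bound[where B=1]) (auto simp: qD(2,3) abs_le_iff intro: order_trans[OF _ qD(3)] order_trans[OF qD(2)])
  have each: "(\<integral>\<omega>. q d (Z \<omega>) * log b (q d (Z \<omega>) / p d) \<partial>M) =
      (\<integral>\<omega>. q d (Z \<omega>) * log b (q d (Z \<omega>)) \<partial>M) - p d * log b (p d)" for d
  proof (cases "p d = 0")
    case True
    then show ?thesis using qD(5)[of d] by (simp add: p_def)
  next
    case False
    then have p0: "0 < p d" unfolding p_def by (simp add: zero_less_measure_iff)
    have "(\<integral>\<omega>. q d (Z \<omega>) * log b (q d (Z \<omega>) / p d) \<partial>M) =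
        (\<integral>\<omega>. q d (Z \<omega>) * log b (q d (Z \<omega>)) - log b (p d) * q d (Z \<omega>) \<partial>M)"
    proof (intro Bochner_Integration.integral_cong refl)
      fix \<omega>
      show "q d (Z \<omega>) * log b (q d (Z \<omega>) / p d) = q d (Z \<omega>) * log b (q d (Z \<omega>)) - log b (p d) * q d (Z \<omega>)"
      proof (cases "q d (Z \<omega>) = 0")
        case False
        then have "0 < q d (Z \<omega>)" using qD(2)[of d "Z \<omega>"] by simp
        then show ?thesis using p0 by (simp add: log_divide algebra_simps)
      qed simp
    qed
    also have "\<dots> = (\<integral>\<omega>. q d (Z \<omega>) * log b (q d (Z \<omega>)) \<partial>M) - log b (p d) * (\<integral>\<omega>. q d (Z \<omega>) \<partial>M)"
      using int1 int2 by simp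
    also have "(\<integral>\<omega>. q d (Z \<omega>) \<partial>M) = p d" unfolding p_def by (rule cdens_total[OF Z q])
    finally show ?thesis by simp
  qed
  have "mutual_information b (count_space UNIV) SZ D Z - entropy b (count_space UNIV) D =
      (\<Sum>d\<in>UNIV. (\<integral>\<omega>. q d (Z \<omega>) * log b (q d (Z \<omega>)) \<partial>M) - p d * log b (p d)) + (\<Sum>d\<in>UNIV. p d * log b (p d))"
    unfolding MI_bool[OF D Z q] entropy_bool[OF D] p_def[symmetric] each by simp
  also have "\<dots> = (\<Sum>d\<in>UNIV. (\<integral>\<omega>. q d (Z \<omega>) * log b (q d (Z \<omega>)) \<partial>M))"
    by (simp add: sum_subtractf)
  also have "\<dots> = (\<integral>\<omega>. (\<Sum>d\<in>UNIV. q d (Z \<omega>) * log b (q d (Z \<omega>))) \<partial>M)"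
    by (rule Bochner_Integration.integral_sum[symmetric]) (rule int1)
  finally show ?thesis .
qed


lemma (in information_space) MI_data_processing:
  fixes A :: "'a \<Rightarrow> bool" and Z :: "'a \<Rightarrow> 'z" and h :: "'z \<Rightarrow> bool"
  assumes A[measurable]: "A \<in> measurable M (count_space UNIV)" and Z[measurable]: "Z \<in> measurable M SZ"
    and h[measurable]: "h \<in> measurable SZ (count_space UNIV)"
  shows "mutual_information b (count_space UNIV) (count_space UNIV) A (\<lambda>\<omega>. h (Z \<omega>))
    \<le> mutual_information b (count_space UNIV) SZ A Z"
proof -
  have hZ[measurable]: "(\<lambda>\<omega>. h (Z \<omega>)) \<in> measurable M (count_space UNIV)" by simp
  obtain q where q: "cdens M A Z SZ q" using cdens_exists[OF A Z] by blast
  obtain q' where q': "cdens M A (\<lambda>\<omega>. h (Z \<omega>)) (count_space UNIV) q'" using cdens_exists[OF A hZ] by blast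
  note qD = cdens_D[OF q] and q'D = cdens_D[OF q']
  have qm[measurable]: "\<And>d. q d \<in> borel_measurable SZ" by (rule qD(1))
  have lb: "0 < ln b" using b_gt_1 by simp
  show ?thesis
    unfolding MI_bool[OF A Z q] MI_bool[OF A hZ q']
  proof (rule sum_mono)
    fix a
    define p where "p = prob {\<omega>\<in>space M. A \<omega> = a}"
    define G where "G y \<omega> = q a (Z \<omega>) * indicator {y} (h (Z \<omega>))" for y \<omega>
    define R where "R y \<omega> = q' a (h (Z \<omega>)) * indicator {y} (h (Z \<omega>))" for y \<omega>
    define c where "c y = log b (q' a y / p)" for y
    have ind[measurable]: "(\<lambda>\<omega>. indicator {y} (h (Z \<omega>)) :: real) \<in> borel_measurable M" for y
      by (rule measurable_compose[OF hZ]) simp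
    have q'm[measurable]: "(\<lambda>\<omega>. q' a (h (Z \<omega>))) \<in> borel_measurable M"
      by (rule measurable_compose[OF hZ]) simp
    have Gm[measurable]: "G y \<in> borel_measurable M" for y unfolding G_def by measurable
    have Rm[measurable]: "R y \<in> borel_measurable M" for y unfolding R_def by measurable
    have Gnn: "0 \<le> G y \<omega>" for y \<omega> unfolding G_def by (simp add: qD(2))
    have bnd: "\<And>(u::real) (v::bool). 0 \<le> u \<Longrightarrow> u \<le> 1 \<Longrightarrow> \<bar>u * indicator {y} v\<bar> \<le> (1::real)" for y by (auto simp: indicator_def)
    have Gint: "integrable M (G y)" for y
      by (rule integrable_const_bound[where B=1]) (auto simp: G_def intro!: bnd qD(2,3))
    have Rint: "integrable M (R y)" for y
      by (rule integrable_const_bound[where B=1]) (auto simp: R_def intro!: bnd q'D(2,3))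
    have GR: "integral\<^sup>L M (G y) = integral\<^sup>L M (R y)" for y
    proof -
      have "integral\<^sup>L M (G y) = (\<integral>\<omega>. q a (Z \<omega>) * indicator (h -` {y} \<inter> space SZ) (Z \<omega>) \<partial>M)"
        unfolding G_def using measurable_space[OF Z] by (intro Bochner_Integration.integral_cong) (auto simp: indicator_def)
      also have "\<dots> = prob {\<omega>\<in>space M. A \<omega> = a \<and> Z \<omega> \<in> h -` {y} \<inter> space SZ}"
        by (rule qD(6)[symmetric]) simp
      also have "\<dots> = prob {\<omega>\<in>space M. A \<omega> = a \<and> h (Z \<omega>) \<in> {y}}"
        using measurable_space[OF Z] by (intro arg_cong[where f=prob]) auto
      also have "\<dots> = integral\<^sup>L M (R y)" unfolding R_def by (rule q'D(6)) simp
      finally show ?thesis .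
    qed
    show "(\<integral>\<omega>. q' a (h (Z \<omega>)) * log b (q' a (h (Z \<omega>)) / p) \<partial>M) \<le>
          (\<integral>\<omega>. q a (Z \<omega>) * log b (q a (Z \<omega>) / p) \<partial>M)"
    proof (cases "p = 0")
      case True
      then show ?thesis using qD(5)[of a] q'D(5)[of a] by (simp add: p_def)
    next
      case False
      then have p0: "0 < p" unfolding p_def by (simp add: zero_less_measure_iff)
      have F2: "AE \<omega> in M. q' a (h (Z \<omega>)) = 0 \<longrightarrow> q a (Z \<omega>) = 0"
      proof -
        have "AE \<omega> in M. \<forall>y\<in>UNIV. q' a y = 0 \<longrightarrow> G y \<omega> = 0"
        proof (rule AE_finite_allI)
          fix y :: bool
          show "AE \<omega> in M. q' a y = 0 \<longrightarrow> G y \<omega> = 0"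
          proof (cases "q' a y = 0")
            case True
            have "R y \<omega> = 0" for \<omega> unfolding R_def using True by (cases "h (Z \<omega>) = y") auto
            then have "R y = (\<lambda>_. 0)" by auto
            then have "integral\<^sup>L M (R y) = 0" by simp
            then have "integral\<^sup>L M (G y) = 0" using GR by simp
            then have "AE \<omega> in M. G y \<omega> = 0"
              using integral_nonneg_eq_0_iff_AE[OF Gint] Gnn by simp
            then show ?thesis by auto
          qed simp
        qed simp
        then show ?thesis
          by eventually_elim (auto simp: G_def dest: spec[of _ "h (Z _)"])
      qed
      define X where "X \<omega> = q a (Z \<omega>)" for \<omega>
      define Rr where "Rr \<omega> = q' a (h (Z \<omega>))" for \<omega>
      have Xm[measurable]: "X \<in> borel_measurable M" unfolding X_def by measurable
      have Rrm[measurable]: "Rr \<in> borel_measurable M" unfolding Rr_def by measurable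
      have X_eq: "X \<omega> = (\<Sum>y\<in>UNIV. G y \<omega>)" for \<omega>
        unfolding X_def G_def UNIV_bool by (cases "h (Z \<omega>)") (auto simp: indicator_def)
      have Rr_eq: "Rr \<omega> = (\<Sum>y\<in>UNIV. R y \<omega>)" for \<omega>
        unfolding Rr_def R_def UNIV_bool by (cases "h (Z \<omega>)") (auto simp: indicator_def)
      have XL_eq: "X \<omega> * log b (Rr \<omega> / p) = (\<Sum>y\<in>UNIV. c y * G y \<omega>)" for \<omega>
        unfolding X_def Rr_def G_def c_def UNIV_bool by (cases "h (Z \<omega>)") (auto simp: indicator_def)
      have RL_eq: "Rr \<omega> * log b (Rr \<omega> / p) = (\<Sum>y\<in>UNIV. c y * R y \<omega>)" for \<omega>
        unfolding Rr_def R_def c_def UNIV_bool by (cases "h (Z \<omega>)") (auto simp: indicator_def)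
      have intXL: "integrable M (\<lambda>\<omega>. X \<omega> * log b (Rr \<omega> / p))"
        unfolding XL_eq by (intro Bochner_Integration.integrable_sum integrable_mult_right Gint)
      have intX: "integrable M X" unfolding X_eq by (intro Bochner_Integration.integrable_sum Gint)
      have intRr: "integrable M Rr" unfolding Rr_eq by (intro Bochner_Integration.integrable_sum Rint)
      have intXX: "integrable M (\<lambda>\<omega>. X \<omega> * log b (X \<omega> / p))"
      proof (rule integrable_const_bound[where B="(1 + \<bar>ln p\<bar>) / ln b"])
        show "AE x in M. norm (X x * log b (X x / p)) \<le> (1 + \<bar>ln p\<bar>) / ln b"
          using xlogx_bound[of "X _" p b] qD(2,3) b_gt_1 p0 by (auto simp: X_def)
      qed simp
      have "(\<integral>\<omega>. Rr \<omega> * log b (Rr \<omega> / p) \<partial>M) = (\<Sum>y\<in>UNIV. c y * integral\<^sup>L M (R y))"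
        unfolding RL_eq by (subst Bochner_Integration.integral_sum) (auto intro: Rint)
      also have "\<dots> = (\<Sum>y\<in>UNIV. c y * integral\<^sup>L M (G y))" by (simp add: GR)
      also have "\<dots> = (\<integral>\<omega>. X \<omega> * log b (Rr \<omega> / p) \<partial>M)"
        unfolding XL_eq by (subst Bochner_Integration.integral_sum) (auto intro: Gint)
      also have "\<dots> = (\<integral>\<omega>. X \<omega> * log b (Rr \<omega> / p) + (X \<omega> - Rr \<omega>) / ln b \<partial>M)"
      proof -
        have "integral\<^sup>L M X = integral\<^sup>L M Rr"
          unfolding X_eq Rr_eq
          by (subst (1 2) Bochner_Integration.integral_sum) (auto intro: Gint Rint simp: GR)
        then show ?thesis using intXL intX intRr by simp
      qed
      also have "\<dots> \<le> (\<integral>\<omega>. X \<omega> * log b (X \<omega> / p) \<partial>M)"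
      proof (rule integral_mono_AE)
        show "integrable M (\<lambda>\<omega>. X \<omega> * log b (Rr \<omega> / p) + (X \<omega> - Rr \<omega>) / ln b)"
          using intXL intX intRr by auto
        show "integrable M (\<lambda>\<omega>. X \<omega> * log b (X \<omega> / p))" by (rule intXX)
        show "AE \<omega> in M. X \<omega> * log b (Rr \<omega> / p) + (X \<omega> - Rr \<omega>) / ln b \<le> X \<omega> * log b (X \<omega> / p)"
          using F2 by eventually_elim (auto intro!: logsum_pt simp: X_def Rr_def qD(2) q'D(2) p0 b_gt_1)
      qed
      finally show ?thesis unfolding X_def Rr_def .
    qed
  qed
qed


lemma (in information_space) phi_int:
  fixes D :: "'a \<Rightarrow> bool" and Z :: "'a \<Rightarrow> 'z"
  assumes Z[measurable]: "Z \<in> measurable M SZ" and q: "cdens M D Z SZ q"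
  shows "integrable M (\<lambda>\<omega>. (\<Sum>d\<in>UNIV. q d (Z \<omega>) * log b (q d (Z \<omega>))))"
proof -
  note qD = cdens_D[OF q]
  have qm[measurable]: "\<And>d. q d \<in> borel_measurable SZ" by (rule qD(1))
  have "integrable M (\<lambda>\<omega>. q d (Z \<omega>) * log b (q d (Z \<omega>)))" for d
  proof (rule integrable_const_bound[where B="(1 + \<bar>ln 1\<bar>) / ln b"])
    show "AE x in M. norm (q d (Z x) * log b (q d (Z x))) \<le> (1 + \<bar>ln 1\<bar>) / ln b"
      using xlogx_bound[of "q d _" 1 b] qD(2,3) b_gt_1 by auto
  qed simp
  then show ?thesis by (intro Bochner_Integration.integrable_sum)
qed

lemma (in information_space) part1:
  fixes Y A :: "'a \<Rightarrow> bool" and Z :: "'a \<Rightarrow> 'z"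
  assumes Y[measurable]: "Y \<in> measurable M (count_space UNIV)" and A[measurable]: "A \<in> measurable M (count_space UNIV)"
    and Z[measurable]: "Z \<in> measurable M SZ"
    and eq: "mutual_information b (count_space UNIV) SZ Y Z = entropy b (count_space UNIV) Y"
  shows "mutual_information b (count_space UNIV) (count_space UNIV) A Y \<le> mutual_information b (count_space UNIV) SZ A Z"
proof -
  obtain q where q: "cdens M Y Z SZ q" using cdens_exists[OF Y Z] by blast
  note qD = cdens_D[OF q]
  have qm[measurable]: "\<And>d. q d \<in> borel_measurable SZ" by (rule qD(1))
  define \<phi> where "\<phi> \<omega> = (\<Sum>d\<in>UNIV. q d (Z \<omega>) * log b (q d (Z \<omega>)))" for \<omega>
  have "integral\<^sup>L M \<phi> = 0" using MI_minus_entropy[OF Y Z q] eq unfolding \<phi>_def by simp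
  moreover have "integrable M \<phi>" unfolding \<phi>_def by (rule phi_int[OF Z q])
  moreover have "\<phi> \<omega> \<le> 0" for \<omega>
    unfolding \<phi>_def by (intro sum_nonpos xlogx_nonpos qD(2,3) b_gt_1)
  ultimately have "AE \<omega> in M. - \<phi> \<omega> = 0"
    using integral_nonneg_eq_0_iff_AE[of M "\<lambda>\<omega>. - \<phi> \<omega>"] by auto
  then have q01: "AE \<omega> in M. q True (Z \<omega>) = 0 \<or> q True (Z \<omega>) = 1"
  proof eventually_elim
    case (elim \<omega>)
    then have "q True (Z \<omega>) * log b (q True (Z \<omega>)) + (1 - q True (Z \<omega>)) * log b (1 - q True (Z \<omega>)) = 0"
      using elim unfolding \<phi>_def UNIV_bool by (simp add: qD(4))
    then show ?case by (intro binent_zero[where b=b] qD(2,3) b_gt_1)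
  qed
  define h where "h z = (q True z = 1)" for z
  have h[measurable]: "h \<in> measurable SZ (count_space UNIV)" unfolding h_def by measurable
  have E1: "prob {\<omega>\<in>space M. Y \<omega> = True \<and> Z \<omega> \<in> {z\<in>space SZ. \<not> h z}} = 0"
  proof -
    have "prob {\<omega>\<in>space M. Y \<omega> = True \<and> Z \<omega> \<in> {z\<in>space SZ. \<not> h z}} =
        (\<integral>\<omega>. q True (Z \<omega>) * indicator {z\<in>space SZ. \<not> h z} (Z \<omega>) \<partial>M)" by (rule qD(6)) simp
    also have "\<dots> = 0"
    proof (rule integral_eq_zero_AE)
      show "AE \<omega> in M. q True (Z \<omega>) * indicator {z\<in>space SZ. \<not> h z} (Z \<omega>) = 0"
        using q01 by eventually_elim (auto simp: h_def indicator_def)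
    qed
    finally show ?thesis .
  qed
  have E2: "prob {\<omega>\<in>space M. Y \<omega> = False \<and> Z \<omega> \<in> {z\<in>space SZ. h z}} = 0"
  proof -
    have "prob {\<omega>\<in>space M. Y \<omega> = False \<and> Z \<omega> \<in> {z\<in>space SZ. h z}} =
        (\<integral>\<omega>. q False (Z \<omega>) * indicator {z\<in>space SZ. h z} (Z \<omega>) \<partial>M)" by (rule qD(6)) simp
    also have "\<dots> = 0"
      by (intro integral_eq_zero_AE AE_I2) (auto simp: h_def indicator_def qD(4))
    finally show ?thesis .
  qed
  have AE1: "AE \<omega> in M. \<not> (Y \<omega> = True \<and> Z \<omega> \<in> {z\<in>space SZ. \<not> h z})"
    using E1 by (subst (asm) prob_Collect_eq_0) auto
  have AE2: "AE \<omega> in M. \<not> (Y \<omega> = False \<and> Z \<omega> \<in> {z\<in>space SZ. h z})"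
    using E2 by (subst (asm) prob_Collect_eq_0) auto
  have YhZ: "AE \<omega> in M. Y \<omega> = h (Z \<omega>)"
    using AE1 AE2 AE_space
  proof eventually_elim
    case (elim \<omega>)
    then have "Z \<omega> \<in> space SZ" using measurable_space[OF Z] by auto
    with elim show ?case by (cases "Y \<omega>") auto
  qed
  have "mutual_information b (count_space UNIV) (count_space UNIV) A Y =
      mutual_information b (count_space UNIV) (count_space UNIV) A (\<lambda>\<omega>. h (Z \<omega>))"
  proof -
    have d1: "distr M (count_space UNIV) Y = distr M (count_space UNIV) (\<lambda>\<omega>. h (Z \<omega>))"
      by (rule distr_cong_AE[OF refl refl YhZ]) auto
    have d2: "distr M (count_space UNIV \<Otimes>\<^sub>M count_space UNIV) (\<lambda>\<omega>. (A \<omega>, Y \<omega>)) =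
        distr M (count_space UNIV \<Otimes>\<^sub>M count_space UNIV) (\<lambda>\<omega>. (A \<omega>, h (Z \<omega>)))"
      by (rule distr_cong_AE[OF refl refl]) (use YhZ in auto)
    show ?thesis unfolding mutual_information_def d1 d2 ..
  qed
  also have "\<dots> \<le> mutual_information b (count_space UNIV) SZ A Z"
    by (rule MI_data_processing[OF A Z h])
  finally show ?thesis .
qed

lemma (in information_space) part2:
  fixes Y :: "'a \<Rightarrow> bool"
  assumes Y[measurable]: "Y \<in> measurable M (count_space UNIV)"
  shows "mutual_information b (count_space UNIV) (count_space UNIV) Y Y = entropy b (count_space UNIV) Y"
proof -
  obtain q where q: "cdens M Y Y (count_space UNIV) q" using cdens_exists[OF Y Y] by blast
  note qD = cdens_D[OF q]
  define pF where "pF = prob {\<omega>\<in>space M. Y \<omega> = False}"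
  define pT where "pT = prob {\<omega>\<in>space M. Y \<omega> = True}"
  have key: "prob {\<omega>\<in>space M. Y \<omega> = d \<and> Y \<omega> \<in> {e}} = q d e * prob {\<omega>\<in>space M. Y \<omega> = e}" for d e
  proof -
    have "prob {\<omega>\<in>space M. Y \<omega> = d \<and> Y \<omega> \<in> {e}} = (\<integral>\<omega>. q d (Y \<omega>) * indicator {e} (Y \<omega>) \<partial>M)"
      by (rule qD(6)) simp
    also have "\<dots> = (\<integral>\<omega>. q d e * indicator {\<omega>\<in>space M. Y \<omega> = e} \<omega> \<partial>M)"
    proof (intro Bochner_Integration.integral_cong refl)
      fix \<omega> show "q d (Y \<omega>) * indicator {e} (Y \<omega>) = q d e * indicator {\<omega>\<in>space M. Y \<omega> = e} \<omega>"
        if "\<omega> \<in> space M" using that by (cases "Y \<omega>"; cases e) (auto simp: indicator_def)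
    qed
    also have "\<dots> = q d e * prob {\<omega>\<in>space M. Y \<omega> = e}"
      by (simp add: Int_absorb2 subset_eq)
    finally show ?thesis .
  qed
  have k1: "q True False * pF = 0" using key[of True False] by (simp add: pF_def)
  have k2: "(1 - q True True) * pT = 0" using key[of False True] by (simp add: pT_def qD(4))
  have a1: "AE \<omega> in M. Y \<omega> = False \<longrightarrow> q True False = 0"
  proof (cases "q True False = 0")
    case False
    then have "pF = 0" using k1 by simp
    then have "AE \<omega> in M. \<not> Y \<omega> = False" unfolding pF_def by (subst (asm) prob_Collect_eq_0) auto
    then show ?thesis by eventually_elim auto
  qed simp
  have a2: "AE \<omega> in M. Y \<omega> = True \<longrightarrow> q True True = 1"
  proof (cases "q True True = 1")
    case False
    then have "pT = 0" using k2 by simp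
    then have "AE \<omega> in M. \<not> Y \<omega> = True" unfolding pT_def by (subst (asm) prob_Collect_eq_0) auto
    then show ?thesis by eventually_elim auto
  qed simp
  have "(\<integral>\<omega>. (\<Sum>d\<in>UNIV. q d (Y \<omega>) * log b (q d (Y \<omega>))) \<partial>M) = 0"
  proof (rule integral_eq_zero_AE)
    show "AE \<omega> in M. (\<Sum>d\<in>UNIV. q d (Y \<omega>) * log b (q d (Y \<omega>))) = 0"
      using a1 a2
    proof eventually_elim
      case (elim \<omega>)
      then show ?case unfolding UNIV_bool by (cases "Y \<omega>") (auto simp: qD(4))
    qed
  qed
  then show ?thesis using MI_minus_entropy[OF Y Y q] by simp
qed

theorem theorem2:
  fixes M :: "'m measure" and SX :: "'x measure" and X :: "'m \<Rightarrow> 'x"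
    and fY fA :: "'x \<Rightarrow> bool"
  assumes P: "prob_space M"
    and X: "X \<in> measurable M SX"
    and fY: "fY \<in> measurable SX (count_space UNIV)"
    and fA: "fA \<in> measurable SX (count_space UNIV)"
  shows
    "(\<forall>(SS :: 's measure) (S :: 'm \<Rightarrow> 's) (SZ :: 'z measure) (g :: 'x \<times> 's \<Rightarrow> 'z).
        S \<in> measurable M SS \<and> distr M (SX \<Otimes>\<^sub>M SS) (\<lambda>\<omega>. (X \<omega>, S \<omega>)) = distr M SX X \<Otimes>\<^sub>M distr M SS S \<and>
        g \<in> measurable (SX \<Otimes>\<^sub>M SS) SZ \<and>
        prob_space.mutual_information M 2 (count_space UNIV) SZ (\<lambda>\<omega>. fY (X \<omega>)) (\<lambda>\<omega>. g (X \<omega>, S \<omega>))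
          = prob_space.entropy M 2 (count_space UNIV) (\<lambda>\<omega>. fY (X \<omega>))
        \<longrightarrow> prob_space.mutual_information M 2 (count_space UNIV) (count_space UNIV)
              (\<lambda>\<omega>. fA (X \<omega>)) (\<lambda>\<omega>. fY (X \<omega>))
            \<le> prob_space.mutual_information M 2 (count_space UNIV) SZ
              (\<lambda>\<omega>. fA (X \<omega>)) (\<lambda>\<omega>. g (X \<omega>, S \<omega>)))
     \<and>
     (\<exists>(SS :: 's measure) (S :: 'm \<Rightarrow> 's) (SZ :: bool measure) (g :: 'x \<times> 's \<Rightarrow> bool).
        S \<in> measurable M SS \<and> distr M (SX \<Otimes>\<^sub>M SS) (\<lambda>\<omega>. (X \<omega>, S \<omega>)) = distr M SX X \<Otimes>\<^sub>M distr M SS S \<and>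
        g \<in> measurable (SX \<Otimes>\<^sub>M SS) SZ \<and>
        prob_space.mutual_information M 2 (count_space UNIV) SZ (\<lambda>\<omega>. fY (X \<omega>)) (\<lambda>\<omega>. g (X \<omega>, S \<omega>))
          = prob_space.entropy M 2 (count_space UNIV) (\<lambda>\<omega>. fY (X \<omega>)) \<and>
        prob_space.mutual_information M 2 (count_space UNIV) SZ
              (\<lambda>\<omega>. fA (X \<omega>)) (\<lambda>\<omega>. g (X \<omega>, S \<omega>))
          = prob_space.mutual_information M 2 (count_space UNIV) (count_space UNIV)
              (\<lambda>\<omega>. fA (X \<omega>)) (\<lambda>\<omega>. fY (X \<omega>)))"
  proof -
  interpret information_space M 2 by (rule information_space.intro[OF P]) (unfold_locales, simp)
  have Y[measurable]: "(\<lambda>\<omega>. fY (X \<omega>)) \<in> measurable M (count_space UNIV)"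
    by (rule measurable_compose[OF X fY])
  have A[measurable]: "(\<lambda>\<omega>. fA (X \<omega>)) \<in> measurable M (count_space UNIV)"
    by (rule measurable_compose[OF X fA])
  show ?thesis
  proof (intro conjI allI impI)
    fix SS :: "'s measure" and S :: "'m \<Rightarrow> 's" and SZ :: "'z measure" and g :: "'x \<times> 's \<Rightarrow> 'z"
    assume H: "S \<in> measurable M SS \<and> distr M (SX \<Otimes>\<^sub>M SS) (\<lambda>\<omega>. (X \<omega>, S \<omega>)) = distr M SX X \<Otimes>\<^sub>M distr M SS S \<and>
        g \<in> measurable (SX \<Otimes>\<^sub>M SS) SZ \<and>
        mutual_information 2 (count_space UNIV) SZ (\<lambda>\<omega>. fY (X \<omega>)) (\<lambda>\<omega>. g (X \<omega>, S \<omega>))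
          = entropy 2 (count_space UNIV) (\<lambda>\<omega>. fY (X \<omega>))"
    have Z: "(\<lambda>\<omega>. g (X \<omega>, S \<omega>)) \<in> measurable M SZ"
      using H by (intro measurable_compose[OF measurable_Pair[OF X] ]) auto
    show "mutual_information 2 (count_space UNIV) (count_space UNIV) (\<lambda>\<omega>. fA (X \<omega>)) (\<lambda>\<omega>. fY (X \<omega>))
        \<le> mutual_information 2 (count_space UNIV) SZ (\<lambda>\<omega>. fA (X \<omega>)) (\<lambda>\<omega>. g (X \<omega>, S \<omega>))"
      using H by (intro part1[OF Y A Z]) auto
  next
    let ?c = "undefined :: 's"
    have S: "(\<lambda>_. ?c) \<in> measurable M (count_space UNIV)" by simp
    have ind: "distr M (SX \<Otimes>\<^sub>M count_space UNIV) (\<lambda>\<omega>. (X \<omega>, ?c)) = distr M SX X \<Otimes>\<^sub>M distr M (count_space UNIV) (\<lambda>_. ?c)"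
    proof (rule pair_measure_eqI[symmetric])
      show "sigma_finite_measure (distr M SX X)"
        using prob_space_distr[OF X] by (simp add: prob_space_imp_sigma_finite)
      show "sigma_finite_measure (distr M (count_space UNIV) (\<lambda>_. ?c))"
        using prob_space_distr[OF S] by (simp add: prob_space_imp_sigma_finite)
      show "sets (distr M SX X \<Otimes>\<^sub>M distr M (count_space UNIV) (\<lambda>_. ?c)) = sets (distr M (SX \<Otimes>\<^sub>M count_space UNIV) (\<lambda>\<omega>. (X \<omega>, ?c)))"
        by (simp add: sets_pair_measure_cong)
      fix B C assume B: "B \<in> sets (distr M SX X)" and C: "C \<in> sets (distr M (count_space UNIV) (\<lambda>_. ?c))"
      then have B': "B \<in> sets SX" by simp
      have m: "(\<lambda>\<omega>. (X \<omega>, ?c)) \<in> measurable M (SX \<Otimes>\<^sub>M count_space UNIV)" using X by simp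
      show "emeasure (distr M SX X) B * emeasure (distr M (count_space UNIV) (\<lambda>_. ?c)) C =
          emeasure (distr M (SX \<Otimes>\<^sub>M count_space UNIV) (\<lambda>\<omega>. (X \<omega>, ?c))) (B \<times> C)"
      proof (cases "?c \<in> C")
        case True
        have "(\<lambda>\<omega>. (X \<omega>, ?c)) -` (B \<times> C) \<inter> space M = X -` B \<inter> space M" using True by auto
        moreover have "(\<lambda>_. ?c) -` C \<inter> space M = space M" using True by auto
        ultimately show ?thesis using B' m X True by (simp add: emeasure_distr emeasure_space_1)
      next
        case False
        have "(\<lambda>\<omega>. (X \<omega>, ?c)) -` (B \<times> C) \<inter> space M = {}" using False by auto
        moreover have "(\<lambda>_. ?c) -` C \<inter> space M = {}" using False by auto
        ultimately show ?thesis using B' m X False by (simp add: emeasure_distr)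
      qed
    qed
    have g: "(\<lambda>(x, s). fY x) \<in> measurable (SX \<Otimes>\<^sub>M (count_space (UNIV :: 's set))) (count_space UNIV)"
      using fY by simp
    show "\<exists>(SS :: 's measure) (S :: 'm \<Rightarrow> 's) (SZ :: bool measure) (g :: 'x \<times> 's \<Rightarrow> bool).
        S \<in> measurable M SS \<and> distr M (SX \<Otimes>\<^sub>M SS) (\<lambda>\<omega>. (X \<omega>, S \<omega>)) = distr M SX X \<Otimes>\<^sub>M distr M SS S \<and>
        g \<in> measurable (SX \<Otimes>\<^sub>M SS) SZ \<and>
        mutual_information 2 (count_space UNIV) SZ (\<lambda>\<omega>. fY (X \<omega>)) (\<lambda>\<omega>. g (X \<omega>, S \<omega>))
          = entropy 2 (count_space UNIV) (\<lambda>\<omega>. fY (X \<omega>)) \<and>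
        mutual_information 2 (count_space UNIV) SZ
              (\<lambda>\<omega>. fA (X \<omega>)) (\<lambda>\<omega>. g (X \<omega>, S \<omega>))
          = mutual_information 2 (count_space UNIV) (count_space UNIV)
              (\<lambda>\<omega>. fA (X \<omega>)) (\<lambda>\<omega>. fY (X \<omega>))"
      by (rule exI[of _ "count_space UNIV"], rule exI[of _ "\<lambda>_. ?c"], rule exI[of _ "count_space UNIV"],
          rule exI[of _ "\<lambda>(x, s). fY x"]) (use S ind g part2[OF Y] in simp)
  qed
qed

end
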